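(* Let $(\rho,\mathbf{u},\Sigma)$ be a smooth solution on $\Omega\subset\mathbb{R}^d$, with $\rho>0$ and $\alpha>0$, of the pressureless HRE system $$\partial_t\rho+\nabla\cdot(\rho\mathbf{u})=0,\quad \partial_t(\rho\mathbf{u})+\nabla\cdot(\rho\mathbf{u}\otimes\mathbf{u}+\Sigma\,\mathbb{I})=0,\quad \rho^{-1}\Sigma-\alpha\nabla\cdot(\rho^{-1}\nabla\Sigma)=\alpha\,\mathrm{tr}\big((\nabla\mathbf{u})^2\big).$$ Then the generalized kinetic energy density $K_E=\frac12\rho\big(|\mathbf{u}|^2+\alpha(\nabla\cdot\mathbf{u})^2\big)$ satisfies the local conservation law $$\partial_t K_E+\nabla\cdot\big((K_E+\Sigma)\mathbf{u}\big)=0.$$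
   Context: $\nabla\mathbf{u}$ is the velocity gradient matrix, $\mathbb{I}$ the identity matrix, and $(\nabla\cdot(\mathbf{a}\otimes\mathbf{b}))_i=\sum_j\partial_j(a_ib_j)$. *)

theory Defs
  imports "HOL-Analysis.Analysis"
begin

fun Ck :: "nat \<Rightarrow> ('a::real_normed_vector \<Rightarrow> 'b::real_normed_vector) \<Rightarrow> 'a set \<Rightarrow> bool" where
  "Ck 0 f D = continuous_on D f"
| "Ck (Suc k) f D = (f differentiable_on D \<and>
      (\<forall>v. Ck k (\<lambda>p. frechet_derivative f (at p) v) D))"

definition smooth_on :: "('a::real_normed_vector \<Rightarrow> 'b::real_normed_vector) \<Rightarrow> 'a set \<Rightarrow> bool" where
  "smooth_on f D = (\<forall>k. Ck k f D)"

text \<open>Space-time points are pairs (t, x) with x in R^d = real^'n.\<close>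
definition dt :: "(real \<times> (real^'n) \<Rightarrow> real) \<Rightarrow> real \<times> (real^'n) \<Rightarrow> real" where
  "dt f p = frechet_derivative f (at p) (1, 0)"

definition dx :: "'n::finite \<Rightarrow> (real \<times> (real^'n) \<Rightarrow> real) \<Rightarrow> real \<times> (real^'n) \<Rightarrow> real" where
  "dx i f p = frechet_derivative f (at p) (0, axis i 1)"

definition grad_u :: "(real \<times> (real^'n) \<Rightarrow> real^'n) \<Rightarrow> real \<times> (real^'n) \<Rightarrow> real^'n^'n" where
  "grad_u u p = (\<chi> i j. dx j (\<lambda>q. u q $ i) p)"

definition div_u :: "(real \<times> (real^'n::finite) \<Rightarrow> real^'n) \<Rightarrow> real \<times> (real^'n) \<Rightarrow> real" where
  "div_u u p = (\<Sum>i\<in>UNIV. dx i (\<lambda>q. u q $ i) p)"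

definition KE :: "real \<Rightarrow> (real \<times> (real^'n::finite) \<Rightarrow> real) \<Rightarrow> (real \<times> (real^'n) \<Rightarrow> real^'n)
    \<Rightarrow> real \<times> (real^'n) \<Rightarrow> real" where
  "KE \<alpha> \<rho> u q = 1/2 * \<rho> q * ((norm (u q))^2 + \<alpha> * (div_u u q)^2)"

end

theory Submission
  imports Defs
begin


definition Dd :: "'a::real_normed_vector \<Rightarrow> ('a \<Rightarrow> 'b::real_normed_vector) \<Rightarrow> 'a \<Rightarrow> 'b" where
  "Dd v f p = frechet_derivative f (at p) v"

lemma FD_works: "f differentiable at p \<Longrightarrow> (f has_derivative (\<lambda>v. Dd v f p)) (at p)"
  unfolding Dd_def using frechet_derivative_works by (metis eta_contract_eq)

lemma Dd_eqI: "(f has_derivative f') (at p) \<Longrightarrow> Dd v f p = f' v"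
  unfolding Dd_def using frechet_derivative_at by metis

lemma Dd_add: "f differentiable at p \<Longrightarrow> g differentiable at p \<Longrightarrow>
   Dd v (\<lambda>q. f q + g q) p = Dd v f p + Dd v g p"
  by (rule Dd_eqI) (intro has_derivative_add FD_works)

lemma Dd_mult: fixes f g :: "'a::real_normed_vector \<Rightarrow> real"
  shows "f differentiable at p \<Longrightarrow> g differentiable at p \<Longrightarrow>
   Dd v (\<lambda>q. f q * g q) p = f p * Dd v g p + Dd v f p * g p"
  by (rule Dd_eqI) (intro has_derivative_mult FD_works)

lemma Dd_sum: "finite I \<Longrightarrow> (\<And>i. i \<in> I \<Longrightarrow> f i differentiable at p) \<Longrightarrow>
   Dd v (\<lambda>q. \<Sum>i\<in>I. f i q) p = (\<Sum>i\<in>I. Dd v (f i) p)"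
  by (rule Dd_eqI) (intro has_derivative_sum FD_works, auto)

lemma Dd_const: "Dd v (\<lambda>q. c) p = 0"
  by (rule Dd_eqI) (rule has_derivative_const)

lemma Dd_scale: fixes f :: "'a::real_normed_vector \<Rightarrow> real"
  shows "f differentiable at p \<Longrightarrow> Dd (c *\<^sub>R v) f p = c * Dd v f p"
  unfolding Dd_def using linear_frechet_derivative[of f "at p"] by (simp add: linear_scale)

lemma Dd_comp: "f differentiable at p \<Longrightarrow> Dd v (\<lambda>q. f q $ j) p = Dd v f p $ j"
  by (rule Dd_eqI) (rule bounded_linear.has_derivative[OF bounded_linear_vec_nth FD_works])

lemma Dd_cong: "open U \<Longrightarrow> p \<in> U \<Longrightarrow> (\<And>q. q \<in> U \<Longrightarrow> f q = g q) \<Longrightarrow> Dd v f p = Dd v g p"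
proof -
  assume a: "open U" "p \<in> U" "\<And>q. q \<in> U \<Longrightarrow> f q = g q"
  have a3: "\<And>q. q \<in> U \<Longrightarrow> g q = f q" using a(3) by metis
  have "(f has_derivative f') (at p) = (g has_derivative f') (at p)" for f'
  proof
    assume "(f has_derivative f') (at p)"
    then show "(g has_derivative f') (at p)"
      using has_derivative_transform_within_open[of f f' p UNIV U g] a by blast
  next
    assume "(g has_derivative f') (at p)"
    then show "(f has_derivative f') (at p)"
      using has_derivative_transform_within_open[of g f' p UNIV U f] a(1,2) a3 by blast
  qed
  then have "(\<lambda>f'. (f has_derivative f') (at p)) = (\<lambda>f'. (g has_derivative f') (at p))"
    by (intro ext)
  then have "frechet_derivative f (at p) = frechet_derivative g (at p)"
    unfolding frechet_derivative_def by (rule arg_cong[of _ _ Eps])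
  then show ?thesis unfolding Dd_def by (rule fun_cong)
qed

lemma diff_cong: "open U \<Longrightarrow> p \<in> U \<Longrightarrow> (\<And>q. q \<in> U \<Longrightarrow> f q = g q) \<Longrightarrow> f differentiable at p \<Longrightarrow> g differentiable at p"
  unfolding differentiable_def using has_derivative_transform_within_open[of f _ p UNIV U g] by blast

lemma Ck_cong: "open U \<Longrightarrow> (\<And>q. q \<in> U \<Longrightarrow> f q = g q) \<Longrightarrow> Ck k f U = Ck k g U"
proof (induction k arbitrary: f g)
  case 0 then show ?case by (simp only: Ck.simps) (rule continuous_on_cong; simp)
next
  case (Suc k)
  have "f differentiable at q \<longleftrightarrow> g differentiable at q" if "q \<in> U" for q
  proof -
    have "\<And>q. q \<in> U \<Longrightarrow> g q = f q" using Suc.prems(2) by metis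
    then show ?thesis using diff_cong[of U q f g] diff_cong[of U q g f] Suc.prems(1,2) that by blast
  qed
  then have d: "(f differentiable_on U) = (g differentiable_on U)"
    using Suc.prems(1) by (simp add: differentiable_on_eq_differentiable_at)
  have "Ck k (\<lambda>p. frechet_derivative f (at p) v) U = Ck k (\<lambda>p. frechet_derivative g (at p) v) U" for v
  proof (rule Suc.IH[OF Suc.prems(1)])
    fix q assume "q \<in> U"
    then show "frechet_derivative f (at q) v = frechet_derivative g (at q) v"
      using Dd_cong[of U q f g v] Suc.prems(1,2) unfolding Dd_def by blast
  qed
  then show ?case using d by (simp only: Ck.simps)
qed

lemma Ck_diff: "Ck (Suc k) f U \<Longrightarrow> open U \<Longrightarrow> p \<in> U \<Longrightarrow> f differentiable at p"
  by (simp add: differentiable_on_eq_differentiable_at)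

lemma Ck_D: "Ck (Suc k) f U \<Longrightarrow> Ck k (Dd v f) U"
  unfolding Dd_def[abs_def] by simp

lemma Ck_comp: "open U \<Longrightarrow> Ck k f U \<Longrightarrow> Ck k (\<lambda>q. f q $ j) U"
proof (induction k arbitrary: f)
  case 0 then show ?case by (simp add: continuous_on_component)
next
  case (Suc k)
  have d: "\<forall>p\<in>U. f differentiable at p" using Suc.prems by (auto intro: Ck_diff)
  have "(\<lambda>q. f q $ j) differentiable at x" if "x \<in> U" for x
    using bounded_linear.has_derivative[OF bounded_linear_vec_nth FD_works[OF d[rule_format, OF that]]]
    unfolding differentiable_def by blast
  then have "(\<lambda>q. f q $ j) differentiable_on U"
    unfolding differentiable_on_eq_differentiable_at[OF Suc.prems(1)] by blast
  moreover have "Ck k (\<lambda>p. frechet_derivative (\<lambda>q. f q $ j) (at p) v) U" for v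
  proof -
    have 1: "Ck k (\<lambda>q. Dd v f q $ j) U" using Suc.IH[OF Suc.prems(1) Ck_D[OF Suc.prems(2)]] .
    have 2: "\<And>q. q \<in> U \<Longrightarrow> Dd v f q $ j = Dd v (\<lambda>q. f q $ j) q"
      using d by (simp add: Dd_comp)
    have "Ck k (Dd v (\<lambda>q. f q $ j)) U"
      using Ck_cong[OF Suc.prems(1), of "\<lambda>q. Dd v f q $ j" "Dd v (\<lambda>q. f q $ j)" k] 1 2 by simp
    then show ?thesis unfolding Dd_def[abs_def] .
  qed
  ultimately show ?case by (simp only: Ck.simps) blast
qed


lemma line_deriv:
  fixes f :: "'a::real_normed_vector \<Rightarrow> real"
  assumes "f differentiable at (a + t *\<^sub>R v)"
  shows "((\<lambda>t. f (a + t *\<^sub>R v)) has_real_derivative Dd v f (a + t *\<^sub>R v)) (at t)"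
proof -
  have g: "((\<lambda>t. a + t *\<^sub>R v) has_derivative (\<lambda>h. h *\<^sub>R v)) (at t)"
    by (auto intro!: derivative_eq_intros)
  have "((\<lambda>t. f (a + t *\<^sub>R v)) has_derivative (\<lambda>h. Dd (h *\<^sub>R v) f (a + t *\<^sub>R v))) (at t)"
    using diff_chain_at[OF g FD_works[OF assms]] by (simp add: o_def)
  then have "((\<lambda>t. f (a + t *\<^sub>R v)) has_derivative (\<lambda>h. Dd v f (a + t *\<^sub>R v) * h)) (at t)"
    by (simp add: Dd_scale[OF assms] mult.commute)
  then show ?thesis by (simp add: has_field_derivative_def)
qed

lemma schwarz_key:
  fixes f :: "'a::real_normed_vector \<Rightarrow> real"
  assumes s: "s > 0"
    and inU: "\<And>t r. 0 \<le> t \<Longrightarrow> t \<le> s \<Longrightarrow> 0 \<le> r \<Longrightarrow> r \<le> s \<Longrightarrow> p + t *\<^sub>R v + r *\<^sub>R w \<in> U"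
    and fd: "\<And>q. q \<in> U \<Longrightarrow> f differentiable at q"
    and gd: "\<And>q. q \<in> U \<Longrightarrow> Dd v f differentiable at q"
  shows "\<exists>t r. 0 < t \<and> t < s \<and> 0 < r \<and> r < s \<and>
    f (p + s *\<^sub>R v + s *\<^sub>R w) - f (p + s *\<^sub>R v) - f (p + s *\<^sub>R w) + f p
      = s^2 * Dd w (Dd v f) (p + t *\<^sub>R v + r *\<^sub>R w)"
proof -
  define \<phi> where "\<phi> t = f ((p + s *\<^sub>R w) + t *\<^sub>R v) - f (p + t *\<^sub>R v)" for t
  have "DERIV \<phi> t :> Dd v f ((p + s *\<^sub>R w) + t *\<^sub>R v) - Dd v f (p + t *\<^sub>R v)"
    if "0 \<le> t" "t \<le> s" for t
  proof -
    have 1: "(p + s *\<^sub>R w) + t *\<^sub>R v \<in> U" using inU[of t s] that s by (simp add: add_ac)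
    have 2: "p + t *\<^sub>R v \<in> U" using inU[of t 0] that s by simp
    show ?thesis unfolding \<phi>_def[abs_def]
      by (intro DERIV_diff line_deriv fd 1 2)
  qed
  from MVT2[OF s this] obtain t where t: "0 < t" "t < s"
    and et: "\<phi> s - \<phi> 0 = (s - 0) * (Dd v f ((p + s *\<^sub>R w) + t *\<^sub>R v) - Dd v f (p + t *\<^sub>R v))"
    by blast
  define \<psi> where "\<psi> r = Dd v f ((p + t *\<^sub>R v) + r *\<^sub>R w)" for r
  have "DERIV \<psi> r :> Dd w (Dd v f) ((p + t *\<^sub>R v) + r *\<^sub>R w)" if "0 \<le> r" "r \<le> s" for r
  proof -
    have 1: "(p + t *\<^sub>R v) + r *\<^sub>R w \<in> U" using inU[of t r] that t by simp
    show ?thesis unfolding \<psi>_def[abs_def] by (intro line_deriv gd 1)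
  qed
  from MVT2[OF s this] obtain r where r: "0 < r" "r < s"
    and er: "\<psi> s - \<psi> 0 = (s - 0) * Dd w (Dd v f) ((p + t *\<^sub>R v) + r *\<^sub>R w)"
    by blast
  have "f (p + s *\<^sub>R v + s *\<^sub>R w) - f (p + s *\<^sub>R v) - f (p + s *\<^sub>R w) + f p = \<phi> s - \<phi> 0"
    unfolding \<phi>_def by (simp add: add_ac)
  also have "\<dots> = s * (\<psi> s - \<psi> 0)" unfolding et \<psi>_def by (simp add: add_ac)
  also have "\<dots> = s^2 * Dd w (Dd v f) (p + t *\<^sub>R v + r *\<^sub>R w)" unfolding er by (simp add: power2_eq_square)
  finally show ?thesis using t r by blast
qed

lemma schwarz:
  fixes f :: "'a::real_normed_vector \<Rightarrow> real"
  assumes U: "open U" "p \<in> U"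
    and fd: "\<And>q. q \<in> U \<Longrightarrow> f differentiable at q"
    and gv: "\<And>q. q \<in> U \<Longrightarrow> Dd v f differentiable at q"
    and gw: "\<And>q. q \<in> U \<Longrightarrow> Dd w f differentiable at q"
    and cv: "continuous_on U (Dd w (Dd v f))"
    and cw: "continuous_on U (Dd v (Dd w f))"
  shows "Dd w (Dd v f) p = Dd v (Dd w f) p"
proof (rule ccontr)
  let ?A = "Dd w (Dd v f) p" and ?B = "Dd v (Dd w f) p"
  assume ne: "?A \<noteq> ?B"
  define e where "e = \<bar>?A - ?B\<bar> / 2"
  have e: "e > 0" using ne by (simp add: e_def)
  have "isCont (Dd w (Dd v f)) p" using cv U continuous_on_eq_continuous_at by blast
  then obtain d1 where d1: "d1 > 0" "\<And>x. dist x p < d1 \<Longrightarrow> dist (Dd w (Dd v f) x) ?A < e"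
    using e unfolding continuous_at_eps_delta by blast
  have "isCont (Dd v (Dd w f)) p" using cw U continuous_on_eq_continuous_at by blast
  then obtain d2 where d2: "d2 > 0" "\<And>x. dist x p < d2 \<Longrightarrow> dist (Dd v (Dd w f) x) ?B < e"
    using e unfolding continuous_at_eps_delta by blast
  obtain d0 where d0: "d0 > 0" "ball p d0 \<subseteq> U" using U openE by blast
  define d where "d = min d0 (min d1 d2)"
  have d: "d > 0" using d0 d1 d2 by (simp add: d_def)
  define s where "s = d / (2 * (norm v + norm w + 1))"
  have np: "norm v + norm w + 1 > 0" by (simp add: add_nonneg_pos)
  have s: "s > 0" using d np by (simp add: s_def)
  have close: "dist (p + t *\<^sub>R v + r *\<^sub>R w) p < d" if "0 \<le> t" "t \<le> s" "0 \<le> r" "r \<le> s" for t r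
  proof -
    have "dist (p + t *\<^sub>R v + r *\<^sub>R w) p = norm (t *\<^sub>R v + r *\<^sub>R w)" by (simp add: dist_norm)
    also have "\<dots> \<le> t * norm v + r * norm w" using norm_triangle_ineq[of "t *\<^sub>R v" "r *\<^sub>R w"] that by simp
    also have "\<dots> \<le> s * norm v + s * norm w" using that by (intro add_mono mult_right_mono) auto
    also have "\<dots> < s * (2 * (norm v + norm w + 1))" 
    proof -
      have "s * (2 * (norm v + norm w + 1)) = 2 * (s * norm v) + 2 * (s * norm w) + 2 * s" by (simp add: algebra_simps)
      moreover have "0 \<le> s * norm v" "0 \<le> s * norm w" using s by simp_all
      ultimately show ?thesis using s by linarith
    qed
    also have "\<dots> = d" unfolding s_def using np by simp
    finally show ?thesis .
  qed
  have inU: "p + t *\<^sub>R v + r *\<^sub>R w \<in> U" if "0 \<le> t" "t \<le> s" "0 \<le> r" "r \<le> s" for t r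
    using close[OF that] d0 unfolding d_def by (auto simp: dist_commute subset_iff)
  have inU': "p + t *\<^sub>R w + r *\<^sub>R v \<in> U" if "0 \<le> t" "t \<le> s" "0 \<le> r" "r \<le> s" for t r
    using inU[of r t] that by (simp add: add_ac)
  obtain t1 r1 where tr1: "0 < t1" "t1 < s" "0 < r1" "r1 < s"
    and e1: "f (p + s *\<^sub>R v + s *\<^sub>R w) - f (p + s *\<^sub>R v) - f (p + s *\<^sub>R w) + f p
      = s^2 * Dd w (Dd v f) (p + t1 *\<^sub>R v + r1 *\<^sub>R w)"
    using schwarz_key[OF s inU fd gv] by blast
  obtain t2 r2 where tr2: "0 < t2" "t2 < s" "0 < r2" "r2 < s"
    and e2: "f (p + s *\<^sub>R w + s *\<^sub>R v) - f (p + s *\<^sub>R w) - f (p + s *\<^sub>R v) + f p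
      = s^2 * Dd v (Dd w f) (p + t2 *\<^sub>R w + r2 *\<^sub>R v)"
    using schwarz_key[OF s inU' fd gw] by blast
  have "s^2 * Dd w (Dd v f) (p + t1 *\<^sub>R v + r1 *\<^sub>R w) = s^2 * Dd v (Dd w f) (p + t2 *\<^sub>R w + r2 *\<^sub>R v)"
  proof -
    have "f (p + s *\<^sub>R w + s *\<^sub>R v) = f (p + s *\<^sub>R v + s *\<^sub>R w)" by (simp add: add_ac)
    then show ?thesis using e1 e2 by linarith
  qed
  then have eq: "Dd w (Dd v f) (p + t1 *\<^sub>R v + r1 *\<^sub>R w) = Dd v (Dd w f) (p + t2 *\<^sub>R w + r2 *\<^sub>R v)"
    using s by simp
  have c1: "dist (p + t1 *\<^sub>R v + r1 *\<^sub>R w) p < d1"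
    using close[of t1 r1] tr1 unfolding d_def by auto
  have c2: "dist (p + t2 *\<^sub>R w + r2 *\<^sub>R v) p < d2"
    using close[of r2 t2] tr2 unfolding d_def by (auto simp: add_ac)
  have "\<bar>?A - ?B\<bar> < e + e"
    using d1(2)[OF c1] d2(2)[OF c2] eq by (simp add: dist_real_def)
  then show False unfolding e_def by simp
qed


lemma Ck2_sym:
  fixes f :: "'a::real_normed_vector \<Rightarrow> real"
  assumes "open U" "Ck (Suc (Suc 0)) f U" "p \<in> U"
  shows "Dd w (Dd v f) p = Dd v (Dd w f) p"
proof (rule schwarz[OF assms(1,3)])
  show "\<And>q. q \<in> U \<Longrightarrow> f differentiable at q" using Ck_diff[OF assms(2,1)] .
  show "\<And>q. q \<in> U \<Longrightarrow> Dd v f differentiable at q" using Ck_diff[OF Ck_D[OF assms(2)] assms(1)] .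
  show "\<And>q. q \<in> U \<Longrightarrow> Dd w f differentiable at q" using Ck_diff[OF Ck_D[OF assms(2)] assms(1)] .
  show "continuous_on U (Dd w (Dd v f))" using Ck_D[OF Ck_D[OF assms(2)]] by simp
  show "continuous_on U (Dd v (Dd w f))" using Ck_D[OF Ck_D[OF assms(2)]] by simp
qed

lemma Dd_if: "Dd v (\<lambda>q. if c then f q else g q) p = (if c then Dd v f p else Dd v g p)"
  by (cases c) simp_all

lemma final_alg:
  fixes r r0 D D0 sg \<alpha> :: real and ri w w0 Di sgi :: "'n::finite \<Rightarrow> real" and wd :: "'n \<Rightarrow> 'n \<Rightarrow> real"
  assumes mass: "r0 + (\<Sum>i\<in>UNIV. r * wd i i + ri i * w i) = 0"
    and Ddef: "D = (\<Sum>i\<in>UNIV. wd i i)"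
    and nc: "\<And>k. w0 k + (\<Sum>i\<in>UNIV. w i * wd k i) + sgi k / r = 0"
    and dd: "D0 + (\<Sum>i\<in>UNIV. w i * Di i) = - (sg / (\<alpha> * r))"
    and r: "r > 0" and a: "\<alpha> > 0"
  defines "S \<equiv> (\<Sum>k\<in>UNIV. w k * w k)"
  shows "1/2 * (r * ((\<Sum>k\<in>UNIV. 2 * (w k * w0 k)) + \<alpha> * (2 * (D * D0))) + r0 * (S + \<alpha> * (D * D)))
    + (\<Sum>i\<in>UNIV. (1/2 * (r * ((\<Sum>k\<in>UNIV. 2 * (w k * wd k i)) + \<alpha> * (2 * (D * Di i))) + ri i * (S + \<alpha> * (D * D))) + sgi i) * w i
        + (1/2 * r * (S + \<alpha> * (D * D)) + sg) * wd i i) = 0"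
proof -
  define X where "X = S + \<alpha> * (D * D)"
  have r0: "r0 = - r * D - (\<Sum>i\<in>UNIV. ri i * w i)"
  proof -
    have "(\<Sum>i\<in>UNIV. r * wd i i + ri i * w i) = r * D + (\<Sum>i\<in>UNIV. ri i * w i)"
      unfolding Ddef by (simp add: sum.distrib sum_distrib_left)
    then show ?thesis using mass by linarith
  qed
  have w0: "w0 k = - (\<Sum>i\<in>UNIV. w i * wd k i) - sgi k / r" for k using nc[of k] by linarith
  have D0: "D0 = - (sg / (\<alpha> * r)) - (\<Sum>i\<in>UNIV. w i * Di i)" using dd by linarith
  have e1: "(\<Sum>k\<in>UNIV. 2 * (w k * w0 k)) = - 2 * (\<Sum>k\<in>UNIV. \<Sum>i\<in>UNIV. w k * w i * wd k i) - 2 * (\<Sum>k\<in>UNIV. w k * sgi k) / r"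
  proof -
    have "2 * (w k * w0 k) = (- 2) * (\<Sum>i\<in>UNIV. w k * w i * wd k i) - 2 * (w k * sgi k) / r" for k
      unfolding w0 by (simp add: sum_distrib_left algebra_simps sum_negf)
    then have "(\<Sum>k\<in>UNIV. 2 * (w k * w0 k)) = (\<Sum>k\<in>UNIV. (- 2) * (\<Sum>i\<in>UNIV. w k * w i * wd k i) - 2 * (w k * sgi k) / r)"
      by simp
    also have "\<dots> = (- 2) * (\<Sum>k\<in>UNIV. \<Sum>i\<in>UNIV. w k * w i * wd k i) - 2 * (\<Sum>k\<in>UNIV. w k * sgi k) / r"
      by (simp only: sum_subtractf sum_distrib_left[symmetric] sum_divide_distrib[symmetric])
    finally show ?thesis by simp
  qed
  have e2: "(\<Sum>i\<in>UNIV. (1/2 * (r * ((\<Sum>k\<in>UNIV. 2 * (w k * wd k i)) + \<alpha> * (2 * (D * Di i))) + ri i * X) + sgi i) * w i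
        + (1/2 * r * X + sg) * wd i i)
     = r * (\<Sum>i\<in>UNIV. \<Sum>k\<in>UNIV. w k * w i * wd k i) + \<alpha> * r * D * (\<Sum>i\<in>UNIV. w i * Di i)
       + 1/2 * X * (\<Sum>i\<in>UNIV. ri i * w i) + (\<Sum>i\<in>UNIV. sgi i * w i) + (1/2 * r * X + sg) * (\<Sum>i\<in>UNIV. wd i i)"
    by (simp add: sum.distrib sum_distrib_left sum_distrib_right algebra_simps)
  have sw: "(\<Sum>i\<in>UNIV. \<Sum>k\<in>UNIV. w k * w i * wd k i) = (\<Sum>k\<in>UNIV. \<Sum>i\<in>UNIV. w k * w i * wd k i)"
    by (rule sum.swap)
  have sg: "(\<Sum>i\<in>UNIV. sgi i * w i) = (\<Sum>k\<in>UNIV. w k * sgi k)" by (simp add: mult.commute)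
  show ?thesis
    unfolding X_def[symmetric] e2 e1 r0 D0 sw sg Ddef[symmetric] using r a
    by (simp add: field_simps)
qed




theorem mainTheorem8:
  fixes \<rho> \<sigma> :: "real \<times> (real^'n) \<Rightarrow> real"
    and u :: "real \<times> (real^'n) \<Rightarrow> real^'n"
    and \<alpha> :: real and T :: "real set" and \<Omega> :: "(real^'n) set"
  assumes "open T" and "open \<Omega>"
    and "smooth_on \<rho> (T \<times> \<Omega>)" and "smooth_on u (T \<times> \<Omega>)" and "smooth_on \<sigma> (T \<times> \<Omega>)"
    and "\<forall>p\<in>T \<times> \<Omega>. \<rho> p > 0" and "\<alpha> > 0"
    and mass: "\<forall>p\<in>T \<times> \<Omega>. dt \<rho> p + (\<Sum>i\<in>UNIV. dx i (\<lambda>q. \<rho> q * u q $ i) p) = 0"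
    and mom: "\<forall>p\<in>T \<times> \<Omega>. \<forall>j. dt (\<lambda>q. \<rho> q * u q $ j) p
               + (\<Sum>i\<in>UNIV. dx i (\<lambda>q. \<rho> q * u q $ j * u q $ i + (if i = j then \<sigma> q else 0)) p) = 0"
    and stress: "\<forall>p\<in>T \<times> \<Omega>. \<sigma> p / \<rho> p - \<alpha> * (\<Sum>i\<in>UNIV. dx i (\<lambda>q. dx i \<sigma> q / \<rho> q) p)
               = \<alpha> * trace (grad_u u p ** grad_u u p)"
  shows "\<forall>p\<in>T \<times> \<Omega>. dt (KE \<alpha> \<rho> u) p
           + (\<Sum>i\<in>UNIV. dx i (\<lambda>q. (KE \<alpha> \<rho> u q + \<sigma> q) * u q $ i) p) = 0"
proof
  fix p assume pU: "p \<in> T \<times> \<Omega>"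
  define U where "U = T \<times> \<Omega>"
  have oU: "open U" using assms(1,2) by (simp add: U_def open_Times)
  have p: "p \<in> U" using pU U_def by simp
  have sm: "Ck (Suc (Suc 0)) \<rho> U" "Ck (Suc (Suc 0)) \<sigma> U" "Ck (Suc (Suc 0)) u U"
    using assms(3-5) unfolding smooth_on_def U_def by blast+
  have smu: "Ck (Suc (Suc 0)) (\<lambda>q. u q $ j) U" for j using Ck_comp[OF oU sm(3)] .
  define e0 :: "real \<times> (real^'n)" where "e0 = (1, 0)"
  define E :: "'n \<Rightarrow> real \<times> (real^'n)" where "E i = (0, axis i 1)" for i
  have dtE: "dt f q = Dd e0 f q" for f q by (simp add: dt_def Dd_def e0_def)
  have dxE: "dx i f q = Dd (E i) f q" for f q i by (simp add: dx_def Dd_def E_def)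
  have d\<rho>: "\<rho> differentiable at q" if "q \<in> U" for q using Ck_diff[OF sm(1) oU that] .
  have d\<sigma>: "\<sigma> differentiable at q" if "q \<in> U" for q using Ck_diff[OF sm(2) oU that] .
  have du: "(\<lambda>q. u q $ j) differentiable at q" if "q \<in> U" for q j using Ck_diff[OF smu oU that] .
  have dDu: "Dd v (\<lambda>q. u q $ j) differentiable at q" if "q \<in> U" for q j v
    using Ck_diff[OF Ck_D[OF smu] oU that] .
  have dD\<sigma>: "Dd v \<sigma> differentiable at q" if "q \<in> U" for q v
    using Ck_diff[OF Ck_D[OF sm(2)] oU that] .
  have pos: "\<rho> q > 0" if "q \<in> U" for q using assms(6) that U_def by blast
  have M: "Dd e0 \<rho> q + (\<Sum>i\<in>UNIV. \<rho> q * Dd (E i) (\<lambda>q. u q $ i) q + Dd (E i) \<rho> q * u q $ i) = 0"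
    if "q \<in> U" for q
    using mass[rule_format, of q] that d\<rho>[OF that] du[OF that]
    by (simp add: U_def dtE dxE Dd_mult)
  have N: "Dd e0 (\<lambda>q. u q $ j) q + (\<Sum>i\<in>UNIV. u q $ i * Dd (E i) (\<lambda>q. u q $ j) q) + Dd (E j) \<sigma> q / \<rho> q = 0"
    if "q \<in> U" for q j
  proof -
    note dd = d\<rho>[OF that] du[OF that] d\<sigma>[OF that]
    have t: "Dd (E i) (\<lambda>q. \<rho> q * u q $ j * u q $ i + (if i = j then \<sigma> q else 0)) q
      = u q $ j * (\<rho> q * Dd (E i) (\<lambda>q. u q $ i) q + Dd (E i) \<rho> q * u q $ i)
        + \<rho> q * (u q $ i * Dd (E i) (\<lambda>q. u q $ j) q) + (if i = j then Dd (E i) \<sigma> q else 0)" for i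
      by (cases "i = j") (simp_all add: dd Dd_mult Dd_add Dd_const algebra_simps)
    have s: "(\<Sum>i\<in>UNIV. Dd (E i) (\<lambda>q. \<rho> q * u q $ j * u q $ i + (if i = j then \<sigma> q else 0)) q)
      = u q $ j * (\<Sum>i\<in>UNIV. \<rho> q * Dd (E i) (\<lambda>q. u q $ i) q + Dd (E i) \<rho> q * u q $ i)
        + \<rho> q * (\<Sum>i\<in>UNIV. u q $ i * Dd (E i) (\<lambda>q. u q $ j) q) + Dd (E j) \<sigma> q"
      unfolding t by (simp add: sum.distrib sum_distrib_left distrib_left)
    have mo: "\<rho> q * Dd e0 (\<lambda>q. u q $ j) q + Dd e0 \<rho> q * u q $ j
      + (\<Sum>i\<in>UNIV. Dd (E i) (\<lambda>q. \<rho> q * u q $ j * u q $ i + (if i = j then \<sigma> q else 0)) q) = 0"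
      using mom[rule_format, of q j] that dd by (simp add: U_def dtE dxE Dd_mult)
    have "\<rho> q * (Dd e0 (\<lambda>q. u q $ j) q + (\<Sum>i\<in>UNIV. u q $ i * Dd (E i) (\<lambda>q. u q $ j) q) + Dd (E j) \<sigma> q / \<rho> q)
      = \<rho> q * Dd e0 (\<lambda>q. u q $ j) q + Dd e0 \<rho> q * u q $ j
      + (\<Sum>i\<in>UNIV. Dd (E i) (\<lambda>q. \<rho> q * u q $ j * u q $ i + (if i = j then \<sigma> q else 0)) q)
      - u q $ j * (Dd e0 \<rho> q + (\<Sum>i\<in>UNIV. \<rho> q * Dd (E i) (\<lambda>q. u q $ i) q + Dd (E i) \<rho> q * u q $ i))"
      unfolding s using pos[OF that] by (simp add: field_simps)
    also have "\<dots> = 0" using mo M[OF that] by simp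
    finally show ?thesis using pos[OF that] by simp
  qed
  note ddp = d\<rho>[OF p] du[OF p] d\<sigma>[OF p] dDu[OF p] dD\<sigma>[OF p]
  have rp: "\<rho> p \<noteq> 0" using pos[OF p] by simp
  have N2: "Dd (E j) (Dd e0 (\<lambda>q. u q $ j)) p
     + (\<Sum>i\<in>UNIV. u p $ i * Dd (E j) (Dd (E i) (\<lambda>q. u q $ j)) p + Dd (E j) (\<lambda>q. u q $ i) p * Dd (E i) (\<lambda>q. u q $ j) p)
     + Dd (E j) (\<lambda>q. Dd (E j) \<sigma> q / \<rho> q) p = 0" for j
  proof -
    have "Dd (E j) (\<lambda>q. Dd e0 (\<lambda>q. u q $ j) q + (\<Sum>i\<in>UNIV. u q $ i * Dd (E i) (\<lambda>q. u q $ j) q) + Dd (E j) \<sigma> q / \<rho> q) p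
      = Dd (E j) (\<lambda>q. 0) p"
      by (rule Dd_cong[OF oU p]) (use N in blast)
    then show ?thesis using ddp rp by (simp add: Dd_add Dd_sum Dd_mult Dd_const algebra_simps)
  qed
  define Dv where "Dv = (\<lambda>q. \<Sum>j\<in>UNIV. Dd (E j) (\<lambda>q. u q $ j) q)"
  have dDv: "Dv differentiable at p" unfolding Dv_def using ddp by simp
  have Dv_d: "Dd v Dv p = (\<Sum>j\<in>UNIV. Dd v (Dd (E j) (\<lambda>q. u q $ j)) p)" for v
    unfolding Dv_def using ddp by (simp add: Dd_sum)
  have sym: "Dd w (Dd v (\<lambda>q. u q $ j)) p = Dd v (Dd w (\<lambda>q. u q $ j)) p" for v w j
    using Ck2_sym[OF oU smu p] .
  define tr where "tr = (\<Sum>j\<in>UNIV. \<Sum>i\<in>UNIV. Dd (E j) (\<lambda>q. u q $ i) p * Dd (E i) (\<lambda>q. u q $ j) p)"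
  define S2 where "S2 = (\<Sum>j\<in>UNIV. Dd (E j) (\<lambda>q. Dd (E j) \<sigma> q / \<rho> q) p)"
  have sumN: "Dd e0 Dv p + (\<Sum>i\<in>UNIV. u p $ i * Dd (E i) Dv p) + tr + S2 = 0"
  proof -
    have "0 = (\<Sum>j\<in>UNIV. Dd (E j) (Dd e0 (\<lambda>q. u q $ j)) p
     + (\<Sum>i\<in>UNIV. u p $ i * Dd (E j) (Dd (E i) (\<lambda>q. u q $ j)) p + Dd (E j) (\<lambda>q. u q $ i) p * Dd (E i) (\<lambda>q. u q $ j) p)
     + Dd (E j) (\<lambda>q. Dd (E j) \<sigma> q / \<rho> q) p)" using N2 by simp
    also have "\<dots> = (\<Sum>j\<in>UNIV. Dd e0 (Dd (E j) (\<lambda>q. u q $ j)) p)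
      + (\<Sum>j\<in>UNIV. \<Sum>i\<in>UNIV. u p $ i * Dd (E i) (Dd (E j) (\<lambda>q. u q $ j)) p) + tr + S2"
      unfolding tr_def S2_def by (simp add: sum.distrib sym)
    also have "(\<Sum>j\<in>UNIV. \<Sum>i\<in>UNIV. u p $ i * Dd (E i) (Dd (E j) (\<lambda>q. u q $ j)) p)
       = (\<Sum>i\<in>UNIV. u p $ i * Dd (E i) Dv p)"
      unfolding Dv_d by (subst sum.swap) (simp add: sum_distrib_left)
    finally show ?thesis unfolding Dv_d by simp
  qed
  have trace_eq: "trace (grad_u u p ** grad_u u p) = tr"
    unfolding tr_def trace_def grad_u_def matrix_matrix_mult_def dxE by (simp add: mult.commute)
  have st: "\<sigma> p / \<rho> p - \<alpha> * S2 = \<alpha> * tr"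
    using stress[rule_format, of p] pU unfolding S2_def trace_eq by (simp add: dxE)
  have dd: "Dd e0 Dv p + (\<Sum>i\<in>UNIV. u p $ i * Dd (E i) Dv p) = - (\<sigma> p / (\<alpha> * \<rho> p))"
  proof -
    have e: "\<sigma> p / \<rho> p = \<alpha> * (S2 + tr)" using st by (simp add: algebra_simps)
    have "\<sigma> p / (\<alpha> * \<rho> p) = (\<sigma> p / \<rho> p) / \<alpha>" by (simp add: divide_divide_eq_left mult.commute)
    also have "\<dots> = S2 + tr" unfolding e using assms(7) by simp
    finally have "S2 = \<sigma> p / (\<alpha> * \<rho> p) - tr" by simp
    then show ?thesis using sumN by linarith
  qed
  define Sq where "Sq = (\<lambda>q. \<Sum>k\<in>UNIV. u q $ k * u q $ k)"
  have KEeq: "KE \<alpha> \<rho> u = (\<lambda>q. 1/2 * \<rho> q * (Sq q + \<alpha> * (Dv q * Dv q)))"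
  proof (rule ext)
    fix q
    have nsq: "(norm (u q))^2 = (\<Sum>k\<in>UNIV. u q $ k * u q $ k)"
      by (simp add: power2_norm_eq_inner inner_vec_def)
    show "KE \<alpha> \<rho> u q = 1/2 * \<rho> q * (Sq q + \<alpha> * (Dv q * Dv q))"
      unfolding KE_def nsq by (simp add: Sq_def Dv_def div_u_def dxE power2_eq_square)
  qed
  have dSq: "Sq differentiable at p" unfolding Sq_def using ddp by simp
  have dKE: "KE \<alpha> \<rho> u differentiable at p" unfolding KEeq using ddp dSq dDv by simp
  have dKEv: "Dd v (KE \<alpha> \<rho> u) p = 1/2 * (\<rho> p * ((\<Sum>k\<in>UNIV. 2 * (u p $ k * Dd v (\<lambda>q. u q $ k) p)) + \<alpha> * (2 * (Dv p * Dd v Dv p)))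
      + Dd v \<rho> p * (Sq p + \<alpha> * (Dv p * Dv p)))" for v
  proof -
    have dS: "Dd v Sq p = (\<Sum>k\<in>UNIV. 2 * (u p $ k * Dd v (\<lambda>q. u q $ k) p))"
      unfolding Sq_def using ddp by (simp add: Dd_sum Dd_mult)
    define F where "F = (\<lambda>q. Sq q + \<alpha> * (Dv q * Dv q))"
    have dF: "F differentiable at p" unfolding F_def using dSq dDv by simp
    have dr2: "(\<lambda>q. 1/2 * \<rho> q) differentiable at p" using ddp by simp
    have dDv2: "(\<lambda>q. Dv q * Dv q) differentiable at p" using dDv by simp
    have e1: "Dd v (\<lambda>q. 1/2 * \<rho> q * F q) p = 1/2 * \<rho> p * Dd v F p + Dd v (\<lambda>q. 1/2 * \<rho> q) p * F p"
      using Dd_mult[of "\<lambda>q. 1/2 * \<rho> q" p F v, OF dr2 dF] .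
    have e2: "Dd v (\<lambda>q. 1/2 * \<rho> q) p = 1/2 * Dd v \<rho> p + Dd v (\<lambda>q. 1/2) p * \<rho> p"
      using Dd_mult[of "\<lambda>q. 1/2" p \<rho> v] ddp by simp
    have e3: "Dd v F p = Dd v Sq p + Dd v (\<lambda>q. \<alpha> * (Dv q * Dv q)) p"
      unfolding F_def using Dd_add[of Sq p "\<lambda>q. \<alpha> * (Dv q * Dv q)" v] dSq dDv2 by simp
    have e4: "Dd v (\<lambda>q. \<alpha> * (Dv q * Dv q)) p = \<alpha> * Dd v (\<lambda>q. Dv q * Dv q) p + Dd v (\<lambda>q. \<alpha>) p * (Dv p * Dv p)"
      using Dd_mult[of "\<lambda>q. \<alpha>" p "\<lambda>q. Dv q * Dv q" v] dDv2 by simp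
    have e5: "Dd v (\<lambda>q. Dv q * Dv q) p = Dv p * Dd v Dv p + Dd v Dv p * Dv p"
      using Dd_mult[of Dv p Dv v] dDv by simp
    have KF: "KE \<alpha> \<rho> u = (\<lambda>q. 1/2 * \<rho> q * F q)" unfolding KEeq F_def ..
    have "Dd v (KE \<alpha> \<rho> u) p = Dd v (\<lambda>q. 1/2 * \<rho> q * F q) p" by (simp only: KF)
    also have "\<dots> = 1/2 * \<rho> p * (Dd v Sq p + (\<alpha> * (Dv p * Dd v Dv p + Dd v Dv p * Dv p) + Dd v (\<lambda>q. \<alpha>) p * (Dv p * Dv p)))
       + (1/2 * Dd v \<rho> p + Dd v (\<lambda>q. 1/2) p * \<rho> p) * F p"
      by (simp only: e1 e2 e3 e4 e5)
    also have "\<dots> = 1/2 * (\<rho> p * ((\<Sum>k\<in>UNIV. 2 * (u p $ k * Dd v (\<lambda>q. u q $ k) p)) + \<alpha> * (2 * (Dv p * Dd v Dv p)))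
      + Dd v \<rho> p * (Sq p + \<alpha> * (Dv p * Dv p)))"
      unfolding dS F_def by (simp add: Dd_const algebra_simps)
    finally show ?thesis .
  qed
  have gx: "Dd (E i) (\<lambda>q. (KE \<alpha> \<rho> u q + \<sigma> q) * u q $ i) p
     = (Dd (E i) (KE \<alpha> \<rho> u) p + Dd (E i) \<sigma> p) * u p $ i + (KE \<alpha> \<rho> u p + \<sigma> p) * Dd (E i) (\<lambda>q. u q $ i) p" for i
    using ddp dKE by (simp add: Dd_add Dd_mult algebra_simps)
  have KEp: "KE \<alpha> \<rho> u p = 1/2 * \<rho> p * (Sq p + \<alpha> * (Dv p * Dv p))" unfolding KEeq by simp
  have fin: "1/2 * (\<rho> p * ((\<Sum>k\<in>UNIV. 2 * (u p $ k * Dd e0 (\<lambda>q. u q $ k) p)) + \<alpha> * (2 * (Dv p * Dd e0 Dv p))) + Dd e0 \<rho> p * (Sq p + \<alpha> * (Dv p * Dv p)))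
    + (\<Sum>i\<in>UNIV. (1/2 * (\<rho> p * ((\<Sum>k\<in>UNIV. 2 * (u p $ k * Dd (E i) (\<lambda>q. u q $ k) p)) + \<alpha> * (2 * (Dv p * Dd (E i) Dv p))) + Dd (E i) \<rho> p * (Sq p + \<alpha> * (Dv p * Dv p))) + Dd (E i) \<sigma> p) * u p $ i
        + (1/2 * \<rho> p * (Sq p + \<alpha> * (Dv p * Dv p)) + \<sigma> p) * Dd (E i) (\<lambda>q. u q $ i) p) = 0"
    unfolding Sq_def
  proof (rule final_alg[where wd = "\<lambda>k i. Dd (E i) (\<lambda>q. u q $ k) p"])
    show "Dd e0 \<rho> p + (\<Sum>i\<in>UNIV. \<rho> p * Dd (E i) (\<lambda>q. u q $ i) p + Dd (E i) \<rho> p * u p $ i) = 0"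
      using M[OF p] .
    show "Dv p = (\<Sum>i\<in>UNIV. Dd (E i) (\<lambda>q. u q $ i) p)" unfolding Dv_def ..
    show "\<And>k. Dd e0 (\<lambda>q. u q $ k) p + (\<Sum>i\<in>UNIV. u p $ i * Dd (E i) (\<lambda>q. u q $ k) p) + Dd (E k) \<sigma> p / \<rho> p = 0"
      using N[OF p] .
    show "Dd e0 Dv p + (\<Sum>i\<in>UNIV. u p $ i * Dd (E i) Dv p) = - (\<sigma> p / (\<alpha> * \<rho> p))" using dd .
    show "\<rho> p > 0" using pos[OF p] .
    show "\<alpha> > 0" using assms(7) .
  qed
  show "dt (KE \<alpha> \<rho> u) p + (\<Sum>i\<in>UNIV. dx i (\<lambda>q. (KE \<alpha> \<rho> u q + \<sigma> q) * u q $ i) p) = 0"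
    unfolding dtE dxE gx dKEv KEp using fin .
qed

end
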